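(* Let $a,b,c$ be parameters (real or complex numbers) such that no denominator below vanishes, let $u(n,a,b,c)=\frac{\prod_{j=0}^{n-1}(b+jc)}{\prod_{j=0}^{n-1}(a+jc)}$, and for integers $n\ge1$, $m\ge0$ let $$D(n,m,a,b,c)=\det\big(u(i+j+m,a,b,c)\big)_{i,j=0}^{n-1}.$$ Then $$D(n,0,a,b,c)=\prod_{k=1}^{n-1}\frac{k!\,c^k\prod_{j=0}^{k-1}(b+jc)(a-b+jc)}{\prod_{j=0}^{k-1}(a+(j+k-1)c)\prod_{j=0}^{2k-1}(a+jc)}$$ and $$D(n,m,a,b,c)=D(n,0,a,b,c)\prod_{j=0}^{m-1}\prod_{i=0}^{n-1}\frac{b+(j+i)c}{a+(i+n+j-1)c}.$$
   Context: Empty products equal $1$. *)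

theory Defs
  imports Complex_Main "Jordan_Normal_Form.Determinant"
begin

definition u :: "nat \<Rightarrow> complex \<Rightarrow> complex \<Rightarrow> complex \<Rightarrow> complex" where
  "u n a b c = (\<Prod>j<n. b + of_nat j * c) / (\<Prod>j<n. a + of_nat j * c)"

definition D :: "nat \<Rightarrow> nat \<Rightarrow> complex \<Rightarrow> complex \<Rightarrow> complex \<Rightarrow> complex" where
  "D n m a b c = det (mat n n (\<lambda>(i, j). u (i + j + m) a b c))"

end

theory Submission
  imports Defs
begin

abbreviation P :: "complex \<Rightarrow> complex \<Rightarrow> nat \<Rightarrow> complex" where
  "P c x k \<equiv> (\<Prod>l<k. x + of_nat l * c)"

lemma P_Suc: "P c x (Suc k) = P c x k * (x + of_nat k * c)"
  by simp

lemma P_Suc_shift: "P c x (Suc k) = x * P c (x + c) k"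
  by (subst prod.lessThan_Suc_shift) (simp add: algebra_simps)

lemma P_add: "P c x (m + k) = P c x m * P c (x + of_nat m * c) k"
  by (induction k) (simp_all add: algebra_simps)

lemma P_nz: "(\<forall>l<k. x + of_nat l * c \<noteq> 0) \<Longrightarrow> P c x k \<noteq> 0"
  by (simp add: prod_zero_iff)

lemma u_Suc: "u (Suc k) a b c = u k a b c * ((b + of_nat k * c) / (a + of_nat k * c))"
  unfolding u_def by (simp add: times_divide_times_eq)

lemma u_add: "u (m + k) a b c = u m a b c * u k (a + of_nat m * c) (b + of_nat m * c) c"
  unfolding u_def by (simp only: P_add times_divide_times_eq)

lemma det_scale:
  fixes f :: "nat \<Rightarrow> nat \<Rightarrow> 'a::comm_ring_1"
  shows "det (mat n n (\<lambda>(i,j). r i * s j * f i j)) =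
    (\<Prod>i<n. r i) * (\<Prod>j<n. s j) * det (mat n n (\<lambda>(i,j). f i j))"
proof -
  have "det (mat n n (\<lambda>(i,j). r i * s j * f i j)) =
    (\<Sum> p \<in> {p. p permutes {0 ..< n}}. signof p * (\<Prod> i = 0 ..< n. r i * s (p i) * f i (p i)))"
    by (subst det_def'[of _ n]) auto
  also have "\<dots> = (\<Sum> p \<in> {p. p permutes {0 ..< n}}.
      (\<Prod>i<n. r i) * (\<Prod>j<n. s j) * (signof p * (\<Prod> i = 0 ..< n. f i (p i))))"
  proof (rule sum.cong[OF refl])
    fix p assume "p \<in> {p. p permutes {0 ..< n}}"
    hence p: "p permutes {0..<n}" by simp
    have "(\<Prod> i = 0 ..< n. r i * s (p i) * f i (p i)) =
      (\<Prod> i = 0 ..< n. r i) * (\<Prod> i = 0 ..< n. s (p i)) * (\<Prod> i = 0 ..< n. f i (p i))"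
      by (simp add: prod.distrib)
    also have "(\<Prod> i = 0 ..< n. s (p i)) = (\<Prod> i = 0 ..< n. s i)"
      using prod.permute[OF p, of s] by (simp add: comp_def)
    finally show "signof p * (\<Prod> i = 0 ..< n. r i * s (p i) * f i (p i)) =
      (\<Prod>i<n. r i) * (\<Prod>j<n. s j) * (signof p * (\<Prod> i = 0 ..< n. f i (p i)))"
      by (simp add: atLeast0LessThan algebra_simps)
  qed
  also have "\<dots> = (\<Prod>i<n. r i) * (\<Prod>j<n. s j) * det (mat n n (\<lambda>(i,j). f i j))"
    by (subst det_def'[of _ n]) (auto simp: sum_distrib_left)
  finally show ?thesis .
qed

lemma entry_identity:
  fixes a b c :: complex and i j :: nat
  assumes nz: "\<forall>l<i+j+2. a + of_nat l * c \<noteq> 0"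
  shows "u (i+j+2) a b c - (b + of_nat j * c) / (a + of_nat j * c) * u (i+j+1) a b c
    = of_nat (i+1) * (c*(a-b)*b/(a*(a+c)*(a + of_nat j * c))) * u (i+j) (a+2*c) (b+c) c"
proof -
  define k where "k = i + j"
  have e1: "P c b (Suc (Suc k)) = P c b (Suc k) * (b + of_nat (Suc k) * c)" by (rule P_Suc)
  have e2: "P c b (Suc k) = b * P c (b+c) k" by (rule P_Suc_shift)
  have e3: "P c a (Suc (Suc k)) = P c a (Suc k) * (a + of_nat (Suc k) * c)" by (rule P_Suc)
  have e4: "P c a (Suc (Suc k)) = a * ((a + c) * P c (a+2*c) k)"
    by (simp only: P_Suc_shift) (simp add: algebra_simps mult_2)
  have nzl: "\<forall>l<Suc (Suc k). a + of_nat l * c \<noteq> 0" using nz k_def by auto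
  have n1: "P c a (Suc (Suc k)) \<noteq> 0" using P_nz[OF nzl] .
  have n2: "a + of_nat (Suc k) * c \<noteq> 0" using nzl by blast
  have n3: "a + of_nat j * c \<noteq> 0" using nzl k_def by auto
  have n4: "a \<noteq> 0" using nzl[rule_format, of 0] by simp
  have n5: "a + c \<noteq> 0" using nzl[rule_format, of 1] by simp
  have n6: "P c a (Suc k) \<noteq> 0" using n1 e3 by auto
  have n7: "P c (a+2*c) k \<noteq> 0" by (metis e4 n1 mult_zero_right)
  define X where "X = P c (b+c) k"
  define Y where "Y = P c (a+2*c) k"
  define Z where "Z = P c a (Suc k)"
  have u2: "u (i+j+2) a b c = b * X * (b + of_nat (Suc k) * c) / (a * ((a + c) * Y))"
  proof -
    have "u (i+j+2) a b c = P c b (Suc (Suc k)) / P c a (Suc (Suc k))"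
      unfolding u_def k_def by simp
    also have "\<dots> = b * X * (b + of_nat (Suc k) * c) / (a * ((a + c) * Y))"
      unfolding X_def Y_def by (simp only: e1 e2 e4)
    finally show ?thesis .
  qed
  have zy: "Z * (a + of_nat (Suc k) * c) = a * ((a + c) * Y)"
    unfolding Z_def Y_def using e3 e4 by simp
  have u1: "u (i+j+1) a b c = b * X * (a + of_nat (Suc k) * c) / (a * ((a + c) * Y))"
  proof -
    have "u (i+j+1) a b c = P c b (Suc k) / Z"
      unfolding u_def k_def Z_def by simp
    also have "\<dots> = b * X / Z"
      unfolding X_def by (simp only: e2)
    also have "\<dots> = b * X * (a + of_nat (Suc k) * c) / (a * ((a + c) * Y))"
      unfolding zy[symmetric] using n2 by simp
    finally show ?thesis .
  qed
  have u0: "u (i+j) (a+2*c) (b+c) c = X / Y"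
    unfolding u_def k_def X_def Y_def by simp
  have n7': "Y \<noteq> 0" unfolding Y_def by (rule n7)
  have kk: "of_nat (Suc k) = (of_nat i + of_nat j + 1 :: complex)" unfolding k_def by simp
  show ?thesis unfolding u0 u1 u2 using n2 n3 n4 n5 n7'
    apply (simp add: divide_simps)
    apply (simp add: k_def algebra_simps)
    done
qed

lemma D_rec:
  assumes nz: "\<forall>j<2*n. a + of_nat j * c \<noteq> 0"
  shows "D (Suc n) 0 a b c = (\<Prod>i<n. of_nat (i+1)) *
     (\<Prod>j<n. c*(a-b)*b/(a*(a+c)*(a + of_nat j * c))) * D n 0 (a+2*c) (b+c) c"
proof -
  define N where "N = Suc n"
  define lam where "lam j = (b + of_nat j * c) / (a + of_nat j * c)" for j :: nat
  define H where "H = mat N N (\<lambda>(i,j). u (i+j) a b c)"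
  define U where "U = mat N N (\<lambda>(i,j). if i = j then 1 else if Suc i = j then - lam i else (0::complex))"
  define M where "M = mat N N (\<lambda>(i,j). if j = 0 then u i a b c else u (i+j) a b c - lam (j-1) * u (i+j-1) a b c)"
  have H: "H \<in> carrier_mat N N" and U: "U \<in> carrier_mat N N" and Mc: "M \<in> carrier_mat N N"
    unfolding H_def U_def M_def by auto
  have HU: "H * U = M"
  proof (rule eq_matI)
    fix i j assume i: "i < dim_row M" and j: "j < dim_col M"
    hence i: "i < N" and j: "j < N" unfolding M_def by auto
    have "(H * U) $$ (i,j) = (\<Sum>k<N. u (i+k) a b c * (if k = j then 1 else if Suc k = j then - lam k else 0))"
      using i j unfolding H_def U_def by (simp add: scalar_prod_def atLeast0LessThan)
    also have "\<dots> = M $$ (i,j)"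
    proof (cases j)
      case 0
      have "(\<Sum>k<N. u (i+k) a b c * (if k = j then 1 else if Suc k = j then - lam k else 0))
        = (\<Sum>k<N. if k = 0 then u (i+k) a b c else 0)"
        by (rule sum.cong) (auto simp: 0)
      also have "\<dots> = u i a b c" using j 0 by simp
      finally show ?thesis using i j 0 unfolding M_def by simp
    next
      case (Suc j')
      have "(\<Sum>k<N. u (i+k) a b c * (if k = j then 1 else if Suc k = j then - lam k else 0))
        = (\<Sum>k<N. (if k = j then u (i+j) a b c else 0) + (if k = j' then - lam j' * u (i+j') a b c else 0))"
        by (rule sum.cong) (auto simp: Suc)
      also have "\<dots> = u (i+j) a b c - lam j' * u (i+j') a b c"
        using j Suc by (simp add: sum.distrib)
      finally show ?thesis using i j Suc unfolding M_def by simp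
    qed
    finally show "(H * U) $$ (i,j) = M $$ (i,j)" .
  qed (auto simp: H_def U_def M_def)
  have detU: "det U = 1"
  proof -
    have "upper_triangular U" unfolding U_def upper_triangular_def by auto
    hence "det U = prod_list (diag_mat U)" using det_upper_triangular U by blast
    also have "\<dots> = 1" unfolding prod_list_diag_prod U_def by simp
    finally show ?thesis .
  qed
  have "det M = det H" using det_mult[OF H U] HU detU by simp
  have row0: "M $$ (0, Suc j) = 0" if "j < n" for j
    using that unfolding M_def N_def lam_def by (simp add: u_Suc)
  have "det M = (\<Sum>j<N. M $$ (0,j) * cofactor M 0 j)"
    using laplace_expansion_row[OF Mc] N_def by simp
  also have "\<dots> = M $$ (0,0) * cofactor M 0 0 + (\<Sum>j<n. M $$ (0,Suc j) * cofactor M 0 (Suc j))"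
    unfolding N_def by (subst sum.lessThan_Suc_shift) simp
  also have "\<dots> = det (mat_delete M 0 0)"
    using row0 unfolding cofactor_def by (simp add: M_def N_def u_def)
  finally have dM: "det M = det (mat_delete M 0 0)" .
  define r where "r i = (of_nat (i+1) :: complex)" for i :: nat
  define s where "s j = c*(a-b)*b/(a*(a+c)*(a + of_nat j * c))" for j :: nat
  have "mat_delete M 0 0 = mat n n (\<lambda>(i,j). r i * s j * u (i+j) (a+2*c) (b+c) c)"
  proof (rule eq_matI)
    fix i j assume "i < dim_row (mat n n (\<lambda>(i,j). r i * s j * u (i+j) (a+2*c) (b+c) c))"
      and "j < dim_col (mat n n (\<lambda>(i,j). r i * s j * u (i+j) (a+2*c) (b+c) c))"
    hence i: "i < n" and j: "j < n" by auto
    have "mat_delete M 0 0 $$ (i,j) = u (i+j+2) a b c - lam j * u (i+j+1) a b c"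
      unfolding mat_delete_def using i j by (simp add: M_def N_def)
    also have "\<dots> = r i * s j * u (i+j) (a+2*c) (b+c) c"
      unfolding lam_def r_def s_def
      by (rule entry_identity) (use nz i j in auto)
    finally show "mat_delete M 0 0 $$ (i,j) = mat n n (\<lambda>(i,j). r i * s j * u (i+j) (a+2*c) (b+c) c) $$ (i,j)"
      using i j by simp
  qed (auto simp: mat_delete_def M_def N_def)
  hence "det (mat_delete M 0 0) = (\<Prod>i<n. r i) * (\<Prod>j<n. s j) * det (mat n n (\<lambda>(i,j). u (i+j) (a+2*c) (b+c) c))"
    using det_scale[where r=r and s=s and n=n and f="\<lambda>i j. u (i+j) (a+2*c) (b+c) c"] by simp
  moreover have "D (Suc n) 0 a b c = det H" unfolding D_def H_def N_def by simp
  moreover have "D n 0 (a+2*c) (b+c) c = det (mat n n (\<lambda>(i,j). u (i+j) (a+2*c) (b+c) c))"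
    unfolding D_def by simp
  ultimately show ?thesis using dM \<open>det M = det H\<close> unfolding r_def s_def by simp
qed

definition T :: "nat \<Rightarrow> complex \<Rightarrow> complex \<Rightarrow> complex \<Rightarrow> complex" where
  "T k a b c = of_nat (fact k) * c ^ k * (\<Prod>j<k. (b + of_nat j * c) * (a - b + of_nat j * c))
                / ((\<Prod>j<k. a + of_nat (j + k - 1) * c) * (\<Prod>j<2 * k. a + of_nat j * c))"

lemma T0: "T 0 a b c = 1" unfolding T_def by simp

lemma prod_1_shift: "(\<Prod>k=1..n. f k) = (\<Prod>k<n. f (Suc k :: nat))"
  using prod.atLeast1_atMost_eq[of f n] by simp

lemma prod_1_pred: assumes "f 0 = 1" shows "(\<Prod>k=1..n-1. f k) = (\<Prod>k<n. f (k::nat))"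
proof (cases n)
  case 0 thus ?thesis by simp
next
  case (Suc m)
  have "(\<Prod>k=1..n-1. f k) = (\<Prod>k<m. f (Suc k))" using prod_1_shift[of f m] Suc by simp
  also have "\<dots> = (\<Prod>k<n. f k)" unfolding Suc prod.lessThan_Suc_shift assms by simp
  finally show ?thesis .
qed

lemma T_rec:
  "T (Suc k) a b c = of_nat (Suc k) * (c*(a-b)*b/(a*(a+c)*(a+of_nat k*c))) * T k (a+2*c) (b+c) c"
proof -
  define N1' where "N1' = (\<Prod>j<k. ((b+c) + of_nat j * c) * ((a+2*c) - (b+c) + of_nat j * c))"
  define Q1' where "Q1' = (\<Prod>j<k. (a+2*c) + of_nat (j + k - 1) * c)"
  define Q2' where "Q2' = (\<Prod>j<2*k. (a+2*c) + of_nat j * c)"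
  have N1: "(\<Prod>j<Suc k. (b + of_nat j * c) * (a - b + of_nat j * c)) = b * (a - b) * N1'"
    unfolding N1'_def by (subst prod.lessThan_Suc_shift) (simp add: algebra_simps)
  have Q1: "(\<Prod>j<Suc k. a + of_nat (j + Suc k - 1) * c) = (a + of_nat k * c) * Q1'"
  proof -
    have "(\<Prod>j<Suc k. a + of_nat (j + Suc k - 1) * c) =
       (a + of_nat k * c) * (\<Prod>j<k. a + of_nat (Suc j + Suc k - 1) * c)"
      by (subst prod.lessThan_Suc_shift) simp
    also have "(\<Prod>j<k. a + of_nat (Suc j + Suc k - 1) * c) = Q1'"
      unfolding Q1'_def
    proof (rule prod.cong[OF refl])
      fix j assume "j \<in> {..<k}"
      hence "Suc j + Suc k - 1 = Suc (Suc (j + k - 1))" by auto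
      thus "a + of_nat (Suc j + Suc k - 1) * c = (a+2*c) + of_nat (j + k - 1) * c"
        by (simp add: algebra_simps)
    qed
    finally show ?thesis .
  qed
  have Q2: "(\<Prod>j<2 * Suc k. a + of_nat j * c) = a * ((a + c) * Q2')"
  proof -
    have "2 * Suc k = Suc (Suc (2*k))" by simp
    hence "(\<Prod>j<2 * Suc k. a + of_nat j * c) = P c a (Suc (Suc (2*k)))" by simp
    also have "\<dots> = a * ((a + c) * P c (a + c + c) (2*k))" by (simp only: P_Suc_shift)
    also have "a + c + c = a + 2 * c" by simp
    finally show ?thesis unfolding Q2'_def .
  qed
  have "T (Suc k) a b c = (of_nat (Suc k) * of_nat (fact k)) * (c * c ^ k) * (b * (a - b) * N1')
       / (((a + of_nat k * c) * Q1') * (a * ((a + c) * Q2')))"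
  proof -
    have fF: "(of_nat (fact (Suc k)) :: complex) = of_nat (Suc k) * of_nat (fact k)"
      by (simp only: fact_Suc of_nat_mult of_nat_id)
    have cS: "c ^ Suc k = c * c ^ k" by simp
    show ?thesis unfolding T_def N1[symmetric] Q1[symmetric] Q2[symmetric] by (simp only: fF cS)
  qed
  also have "\<dots> = of_nat (Suc k) * (c*(a-b)*b/(a*(a+c)*(a+of_nat k*c))) * (of_nat (fact k) * c ^ k * N1' / (Q1' * Q2'))"
  proof -
    define S where "S = (of_nat (Suc k) :: complex)"
    define X where "X = c*(a-b)*b"
    define Y where "Y = a*(a+c)*(a+of_nat k*c)"
    define Z where "Z = of_nat (fact k) * c ^ k * N1'"
    define W where "W = Q1' * Q2'"
    have num: "(S * of_nat (fact k)) * (c * c ^ k) * (b * (a - b) * N1') = S * (X * Z)"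
      unfolding X_def Z_def by (simp add: mult_ac)
    have den: "((a + of_nat k * c) * Q1') * (a * ((a + c) * Q2')) = Y * W"
      unfolding Y_def W_def by (simp add: mult_ac)
    have "(S * of_nat (fact k)) * (c * c ^ k) * (b * (a - b) * N1')
       / (((a + of_nat k * c) * Q1') * (a * ((a + c) * Q2'))) = S * (X * Z) / (Y * W)"
      unfolding num den ..
    also have "\<dots> = S * (X / Y) * (Z / W)"
      using times_divide_eq_right[of S "X*Z" "Y*W", symmetric] times_divide_times_eq[of X Y Z W, symmetric]
      by (simp only: mult.assoc)
    finally show ?thesis unfolding S_def X_def Y_def Z_def W_def by simp
  qed
  also have "of_nat (fact k) * c ^ k * N1' / (Q1' * Q2') = T k (a+2*c) (b+c) c"
    unfolding T_def N1'_def Q1'_def Q2'_def by simp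
  finally show ?thesis .
qed

lemma F_rec:
  "(\<Prod>k=1..Suc n-1. T k a b c) = (\<Prod>i<n. of_nat (i+1)) *
     (\<Prod>j<n. c*(a-b)*b/(a*(a+c)*(a + of_nat j * c))) * (\<Prod>k=1..n-1. T k (a+2*c) (b+c) c)"
proof -
  have "(\<Prod>k=1..Suc n-1. T k a b c) = (\<Prod>k<n. T (Suc k) a b c)"
    using prod_1_shift[of "\<lambda>k. T k a b c" n] by simp
  also have "\<dots> = (\<Prod>k<n. of_nat (k+1) * (c*(a-b)*b/(a*(a+c)*(a+of_nat k*c))) * T k (a+2*c) (b+c) c)"
    by (intro prod.cong refl) (subst T_rec, simp)
  also have "\<dots> = (\<Prod>i<n. of_nat (i+1)) *
     (\<Prod>j<n. c*(a-b)*b/(a*(a+c)*(a + of_nat j * c))) * (\<Prod>k<n. T k (a+2*c) (b+c) c)"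
    by (simp only: prod.distrib)
  also have "(\<Prod>k<n. T k (a+2*c) (b+c) c) = (\<Prod>k=1..n-1. T k (a+2*c) (b+c) c)"
    by (rule prod_1_pred[symmetric]) (rule T0)
  finally show ?thesis .
qed

lemma part1:
  "(\<forall>j < 2 * n - 2. a + of_nat j * c \<noteq> 0) \<Longrightarrow> D n 0 a b c = (\<Prod>k=1..n-1. T k a b c)"
proof (induction n arbitrary: a b)
  case 0
  then show ?case unfolding D_def by simp
next
  case (Suc n)
  have h1: "\<forall>j<2*n. a + of_nat j * c \<noteq> 0" using Suc.prems by simp
  have h2: "\<forall>j < 2 * n - 2. (a+2*c) + of_nat j * c \<noteq> 0"
  proof (intro allI impI)
    fix j assume "j < 2*n-2"
    hence "j + 2 < 2 * Suc n - 2" by simp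
    hence "a + of_nat (j+2) * c \<noteq> 0" using Suc.prems by blast
    thus "(a+2*c) + of_nat j * c \<noteq> 0" by (simp add: algebra_simps)
  qed
  have "D (Suc n) 0 a b c = (\<Prod>i<n. of_nat (i+1)) *
     (\<Prod>j<n. c*(a-b)*b/(a*(a+c)*(a + of_nat j * c))) * D n 0 (a+2*c) (b+c) c"
    by (rule D_rec[OF h1])
  also have "D n 0 (a+2*c) (b+c) c = (\<Prod>k=1..n-1. T k (a+2*c) (b+c) c)"
    by (rule Suc.IH[OF h2])
  finally show ?case by (simp only: F_rec)
qed

lemma D_shift: "D n m a b c = u m a b c ^ n * D n 0 (a + of_nat m * c) (b + of_nat m * c) c"
proof -
  have "mat n n (\<lambda>(i,j). u (i+j+m) a b c) = u m a b c \<cdot>\<^sub>m mat n n (\<lambda>(i,j). u (i+j+0) (a + of_nat m * c) (b + of_nat m * c) c)"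
    by (rule eq_matI) (auto simp: u_add[symmetric] add.commute)
  thus ?thesis unfolding D_def by simp
qed

lemma aux_field:
  fixes F Nb Nb' N2 Q1 Q1' Q2 Q2' A0 A1 A2 B a b :: complex
  assumes "Q1 \<noteq> 0" "Q2 \<noteq> 0" "Q1' \<noteq> 0" "Q2' \<noteq> 0"
    and e1: "Nb' * b = Nb * B" and e2: "Q1 * A1 = Q1' * A0" and e3: "Q2 * A2 = a * Q2'"
  shows "F*(Nb'*N2)/(Q1'*Q2') * b * (A1 * A2) = F*(Nb*N2)/(Q1*Q2) * B * A0 * a"
proof -
  have "F*N2*(Nb'*b)*(Q1*A1)*(Q2*A2) = F*N2*(Nb*B)*(Q1'*A0)*(a*Q2')"
    by (simp only: e1 e2 e3)
  thus ?thesis using assms(1-4) by (simp add: divide_simps) (simp add: algebra_simps)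
qed

lemma T_shift:
  assumes nz: "\<forall>j<2*k+3. a + of_nat j * c \<noteq> 0"
  shows "T (Suc k) (a+c) (b+c) c * b * ((a + of_nat (2*k+1)*c) * (a + of_nat (2*k+2)*c))
       = T (Suc k) a b c * (b + of_nat (Suc k) * c) * (a + of_nat k * c) * a"
proof -
  define K where "K = Suc k"
  define F where "F = of_nat (fact K) * c^K"
  define Nb where "Nb = P c b K"
  define Nb' where "Nb' = P c (b+c) K"
  define N2 where "N2 = (\<Prod>j<K. a - b + of_nat j * c)"
  define Q1 where "Q1 = (\<Prod>j<K. a + of_nat (j+k) * c)"
  define Q1' where "Q1' = (\<Prod>j<K. (a+c) + of_nat (j+k) * c)"
  define Q2 where "Q2 = P c a (2*K)"
  define Q2' where "Q2' = P c (a+c) (2*K)"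
  have T1: "T K a b c = F*(Nb*N2)/(Q1*Q2)"
    unfolding T_def F_def Nb_def N2_def Q1_def Q2_def K_def by (simp add: prod.distrib)
  have T2: "T K (a+c) (b+c) c = F*(Nb'*N2)/(Q1'*Q2')"
    unfolding T_def F_def Nb'_def N2_def Q1'_def Q2'_def K_def by (simp add: prod.distrib)
  have e1: "Nb' * b = Nb * (b + of_nat K * c)"
  proof -
    have "P c b (Suc K) = b * Nb'" unfolding Nb'_def by (rule P_Suc_shift)
    hence "Nb' * b = P c b (Suc K)" by (simp only: mult.commute)
    also have "\<dots> = Nb * (b + of_nat K * c)" unfolding Nb_def by (rule P_Suc)
    finally show ?thesis .
  qed
  define g where "g j = a + of_nat (j+k) * c" for j
  have e2: "Q1 * (a + of_nat (2*k+1)*c) = Q1' * (a + of_nat k * c)"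
  proof -
    have "(\<Prod>j<Suc K. g j) = Q1 * (a + of_nat (2*k+1)*c)"
      unfolding Q1_def g_def K_def by simp
    moreover have "(\<Prod>j<Suc K. g j) = Q1' * (a + of_nat k * c)"
      unfolding Q1'_def g_def K_def prod.lessThan_Suc_shift[of _ "Suc k"]
      by (simp add: algebra_simps)
    ultimately show ?thesis by simp
  qed
  have e3: "Q2 * (a + of_nat (2*k+2)*c) = a * Q2'"
  proof -
    have "Q2 * (a + of_nat (2*k+2)*c) = P c a (Suc (2*K))"
      unfolding Q2_def K_def by (simp only: P_Suc) simp
    also have "\<dots> = a * Q2'" unfolding Q2'_def by (rule P_Suc_shift)
    finally show ?thesis .
  qed
  have h: "a + of_nat (j+k)*c \<noteq> 0" if "j<K" for j
    by (rule nz[rule_format]) (use that in \<open>simp add: K_def\<close>)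
  have nQ1: "Q1 \<noteq> 0" unfolding Q1_def using h
    by (subst prod_zero_iff) auto
  have nQ2: "Q2 \<noteq> 0" unfolding Q2_def K_def by (rule P_nz) (use nz in auto)
  have nA1: "a + of_nat (2*k+1)*c \<noteq> 0" by (rule nz[rule_format]) simp
  have nA2: "a + of_nat (2*k+2)*c \<noteq> 0" by (rule nz[rule_format]) simp
  have na: "a \<noteq> 0" using nz[rule_format, of 0] by simp
  have nA0: "a + of_nat k * c \<noteq> 0" by (rule nz[rule_format]) simp
  have nQ1': "Q1' \<noteq> 0" using e2 nQ1 nA1 by (metis mult_eq_0_iff)
  have nQ2': "Q2' \<noteq> 0" using e3 nQ2 nA2 by (metis mult_eq_0_iff)
  show ?thesis
    unfolding K_def[symmetric] T1 T2
    by (rule aux_field[OF nQ1 nQ2 nQ1' nQ2' e1 e2 e3])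
qed

lemma prod_pairs:
  fixes f :: "nat \<Rightarrow> 'a::comm_monoid_mult" and m :: nat
  shows "(\<Prod>j<2*m. f j) = (\<Prod>k<m. f (2*k) * f (2*k+1))"
proof (induction m)
  case 0 thus ?case by simp
next
  case (Suc m)
  have "2 * Suc m = Suc (Suc (2*m))" by simp
  hence "(\<Prod>j<2*Suc m. f j) = (\<Prod>j<2*m. f j) * f (2*m) * f (2*m+1)"
    by (simp only: prod.lessThan_Suc) simp
  thus ?case using Suc by (simp add: mult.assoc)
qed

lemma aux2:
  fixes a b E Pa Pa'' F F' Bp Pb :: complex
  assumes na: "a \<noteq> 0" and nE: "E \<noteq> 0" and nPa: "Pa \<noteq> 0" and nPa'': "Pa'' \<noteq> 0"
    and key: "F' * b^n * E = F * Bp * Pa * a^n" and e: "a * E = Pa * Pa''" and pb: "Pb = b * Bp"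
  shows "(b/a)^(Suc n) * F' = F * (Pb/Pa'')"
proof (cases "b = 0")
  case True thus ?thesis using pb by simp
next
  case False
  have "(b^(Suc n) * F' * Pa'') * (a * E) = (b * Pa'' * a) * (F' * b^n * E)"
    by (simp add: algebra_simps)
  also have "\<dots> = (b * Pa'' * a) * (F * Bp * Pa * a^n)" by (simp only: key)
  also have "\<dots> = (F * Pb * a^(Suc n)) * (Pa * Pa'')" using pb by (simp add: algebra_simps)
  also have "\<dots> = (F * Pb * a^(Suc n)) * (a * E)" by (simp only: e)
  finally have "b^(Suc n) * F' * Pa'' = F * Pb * a^(Suc n)" using na nE by simp
  thus ?thesis using na nPa'' by (simp add: divide_simps power_divide)
qed

lemma S_shift:
  assumes nz: "\<forall>j<2*n'+1. a + of_nat j * c \<noteq> 0"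
  shows "(b/a)^(Suc n') * (\<Prod>k=1..Suc n'-1. T k (a+c) (b+c) c)
    = (\<Prod>k=1..Suc n'-1. T k a b c) * (\<Prod>i<Suc n'. (b + of_nat i * c)/(a + of_nat (i + Suc n' - 1) * c))"
proof -
  define F' where "F' = (\<Prod>k<n'. T (Suc k) (a+c) (b+c) c)"
  define F where "F = (\<Prod>k<n'. T (Suc k) a b c)"
  define E where "E = (\<Prod>k<n'. (a + of_nat (2*k+1)*c) * (a + of_nat (2*k+2)*c))"
  define Bp where "Bp = (\<Prod>k<n'. b + of_nat (Suc k) * c)"
  define Pa where "Pa = P c a n'"
  define Pa'' where "Pa'' = P c (a + of_nat n' * c) (Suc n')"
  define Pb where "Pb = P c b (Suc n')"
  have l1: "(\<Prod>k=1..Suc n'-1. T k (a+c) (b+c) c) = F'"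
    unfolding F'_def using prod_1_shift[of "\<lambda>k. T k (a+c) (b+c) c" n'] by simp
  have l2: "(\<Prod>k=1..Suc n'-1. T k a b c) = F"
    unfolding F_def using prod_1_shift[of "\<lambda>k. T k a b c" n'] by simp
  have l3: "(\<Prod>i<Suc n'. (b + of_nat i * c)/(a + of_nat (i + Suc n' - 1) * c)) = Pb / Pa''"
    unfolding Pb_def Pa''_def prod_dividef by (simp add: algebra_simps)
  have "(\<Prod>k<n'. T (Suc k) (a+c) (b+c) c * b * ((a + of_nat (2*k+1)*c) * (a + of_nat (2*k+2)*c)))
      = (\<Prod>k<n'. T (Suc k) a b c * (b + of_nat (Suc k) * c) * (a + of_nat k * c) * a)"
  proof (rule prod.cong[OF refl])
    fix k assume "k \<in> {..<n'}"
    hence "\<forall>j<2*k+3. a + of_nat j * c \<noteq> 0" using nz by auto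
    thus "T (Suc k) (a+c) (b+c) c * b * ((a + of_nat (2*k+1)*c) * (a + of_nat (2*k+2)*c))
      = T (Suc k) a b c * (b + of_nat (Suc k) * c) * (a + of_nat k * c) * a"
      by (rule T_shift)
  qed
  hence key: "F' * b^n' * E = F * Bp * Pa * a^n'"
    unfolding F'_def F_def E_def Bp_def Pa_def by (simp only: prod.distrib prod_constant card_lessThan)
  have E2: "E = P c (a+c) (2*n')"
    unfolding E_def prod_pairs by (intro prod.cong refl) (simp add: algebra_simps)
  have e: "a * E = Pa * Pa''"
  proof -
    have "a * E = P c a (Suc (2*n'))" unfolding E2 by (rule P_Suc_shift[symmetric])
    also have "Suc (2*n') = n' + Suc n'" by simp
    also have "P c a (n' + Suc n') = Pa * Pa''" unfolding Pa_def Pa''_def by (rule P_add)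
    finally show ?thesis .
  qed
  have pb: "Pb = b * Bp"
    unfolding Pb_def Bp_def P_Suc_shift by (simp add: algebra_simps)
  have na: "a \<noteq> 0" using nz[rule_format, of 0] by simp
  have nA: "a * E \<noteq> 0"
    unfolding E2 P_Suc_shift[symmetric] by (rule P_nz) (use nz in auto)
  hence nE: "E \<noteq> 0" by simp
  have nPa: "Pa \<noteq> 0" using e nA by auto
  have nPa'': "Pa'' \<noteq> 0" using e nA by auto
  show ?thesis unfolding l1 l2 l3
    by (rule aux2[OF na nE nPa nPa'' key e pb])
qed

lemma part2_aux:
  assumes n: "n \<ge> 1"
  shows "(\<forall>j<2*n+m-2. a + of_nat j * c \<noteq> 0) \<Longrightarrow>
    u m a b c ^ n * (\<Prod>k=1..n-1. T k (a + of_nat m*c) (b + of_nat m*c) c)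
    = (\<Prod>k=1..n-1. T k a b c) * (\<Prod>j<m. \<Prod>i<n. (b + of_nat (j+i)*c)/(a + of_nat (i+n+j-1)*c))"
proof (induction m)
  case 0 thus ?case unfolding u_def by simp
next
  case (Suc m)
  obtain n' where n': "n = Suc n'" using n by (cases n) auto
  define a' where "a' = a + of_nat m * c"
  define b' where "b' = b + of_nat m * c"
  have IH: "u m a b c ^ n * (\<Prod>k=1..n-1. T k a' b' c)
    = (\<Prod>k=1..n-1. T k a b c) * (\<Prod>j<m. \<Prod>i<n. (b + of_nat (j+i)*c)/(a + of_nat (i+n+j-1)*c))"
    unfolding a'_def b'_def by (rule Suc.IH) (use Suc.prems in auto)
  have nz: "\<forall>j<2*n'+1. a' + of_nat j * c \<noteq> 0"
  proof (intro allI impI)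
    fix j assume "j < 2*n'+1"
    hence "m + j < 2*n + Suc m - 2" using n' by simp
    hence "a + of_nat (m+j) * c \<noteq> 0" using Suc.prems by blast
    thus "a' + of_nat j * c \<noteq> 0" unfolding a'_def by (simp add: algebra_simps)
  qed
  have S: "(b'/a')^n * (\<Prod>k=1..n-1. T k (a'+c) (b'+c) c)
    = (\<Prod>k=1..n-1. T k a' b' c) * (\<Prod>i<n. (b' + of_nat i * c)/(a' + of_nat (i + n - 1) * c))"
    using S_shift[OF nz, of b'] n' by simp
  have sa: "a + of_nat (Suc m) * c = a' + c" unfolding a'_def by (simp add: algebra_simps)
  have sb: "b + of_nat (Suc m) * c = b' + c" unfolding b'_def by (simp add: algebra_simps)
  have us: "u (Suc m) a b c = u m a b c * (b'/a')" unfolding a'_def b'_def by (rule u_Suc)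
  have R: "(\<Prod>i<n. (b' + of_nat i * c)/(a' + of_nat (i + n - 1) * c))
     = (\<Prod>i<n. (b + of_nat (m+i)*c)/(a + of_nat (i+n+m-1)*c))"
  proof (intro prod.cong refl)
    fix i assume "i \<in> {..<n}"
    have "i + n + m - 1 = m + (i + n - 1)" using n by simp
    thus "(b' + of_nat i * c)/(a' + of_nat (i + n - 1) * c) = (b + of_nat (m+i)*c)/(a + of_nat (i+n+m-1)*c)"
      unfolding a'_def b'_def by (simp only: of_nat_add) (simp add: algebra_simps)
  qed
  have "u (Suc m) a b c ^ n * (\<Prod>k=1..n-1. T k (a + of_nat (Suc m)*c) (b + of_nat (Suc m)*c) c)
      = u m a b c ^ n * ((b'/a')^n * (\<Prod>k=1..n-1. T k (a'+c) (b'+c) c))"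
    unfolding us sa sb power_mult_distrib by (simp only: mult.assoc)
  also have "\<dots> = (u m a b c ^ n * (\<Prod>k=1..n-1. T k a' b' c)) * (\<Prod>i<n. (b' + of_nat i * c)/(a' + of_nat (i + n - 1) * c))"
    unfolding S by (simp only: mult.assoc)
  also have "\<dots> = (\<Prod>k=1..n-1. T k a b c) * (\<Prod>j<Suc m. \<Prod>i<n. (b + of_nat (j+i)*c)/(a + of_nat (i+n+j-1)*c))"
    unfolding IH R prod.lessThan_Suc by (simp only: mult.assoc)
  finally show ?case .
qed

theorem corollary2:
  fixes n m :: nat and a b c :: complex
  assumes "n \<ge> 1"
  shows "((\<forall>j < 2 * n - 2. a + of_nat j * c \<noteq> 0) \<longrightarrow>
           D n 0 a b c =
             (\<Prod>k = 1..n - 1.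
                of_nat (fact k) * c ^ k * (\<Prod>j<k. (b + of_nat j * c) * (a - b + of_nat j * c))
                / ((\<Prod>j<k. a + of_nat (j + k - 1) * c) * (\<Prod>j<2 * k. a + of_nat j * c))))
       \<and> ((\<forall>j < 2 * n + m - 2. a + of_nat j * c \<noteq> 0) \<longrightarrow>
           D n m a b c =
             D n 0 a b c * (\<Prod>j<m. \<Prod>i<n. (b + of_nat (j + i) * c) / (a + of_nat (i + n + j - 1) * c)))"
proof (intro conjI impI)
  assume h: "\<forall>j < 2 * n - 2. a + of_nat j * c \<noteq> 0"
  show "D n 0 a b c =
             (\<Prod>k = 1..n - 1.
                of_nat (fact k) * c ^ k * (\<Prod>j<k. (b + of_nat j * c) * (a - b + of_nat j * c))
                / ((\<Prod>j<k. a + of_nat (j + k - 1) * c) * (\<Prod>j<2 * k. a + of_nat j * c)))"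
    using part1[OF h] unfolding T_def .
next
  assume h: "\<forall>j < 2 * n + m - 2. a + of_nat j * c \<noteq> 0"
  have h1: "\<forall>j < 2 * n - 2. a + of_nat j * c \<noteq> 0" using h by auto
  have h2: "\<forall>j < 2 * n - 2. (a + of_nat m * c) + of_nat j * c \<noteq> 0"
  proof (intro allI impI)
    fix j assume "j < 2*n-2"
    hence "m + j < 2*n + m - 2" by simp
    hence "a + of_nat (m+j) * c \<noteq> 0" using h by blast
    thus "(a + of_nat m * c) + of_nat j * c \<noteq> 0" by (simp add: algebra_simps)
  qed
  have "D n m a b c = u m a b c ^ n * D n 0 (a + of_nat m * c) (b + of_nat m * c) c"
    by (rule D_shift)
  also have "\<dots> = u m a b c ^ n * (\<Prod>k=1..n-1. T k (a + of_nat m*c) (b + of_nat m*c) c)"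
    by (simp only: part1[OF h2])
  also have "\<dots> = (\<Prod>k=1..n-1. T k a b c) * (\<Prod>j<m. \<Prod>i<n. (b + of_nat (j+i)*c)/(a + of_nat (i+n+j-1)*c))"
    by (rule part2_aux[OF assms h])
  also have "(\<Prod>k=1..n-1. T k a b c) = D n 0 a b c" by (rule part1[OF h1, symmetric])
  finally show "D n m a b c =
             D n 0 a b c * (\<Prod>j<m. \<Prod>i<n. (b + of_nat (j + i) * c) / (a + of_nat (i + n + j - 1) * c))" .
qed

end
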